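(* The symmetrized bidisc $\mathbb{G}=\{(z_1+z_2,z_1z_2):z_1,z_2\in\mathbb{D}\}$ is biholomorphic to the domain $\mathcal{D}_1=\{(z_1,z_2)\in\mathbb{C}^2: 1+|z_1|^2-|z_2|^2>|1+z_1^2-z_2^2|,\ \mathrm{Im}(z_1(1+\overline{z_2}))>0\}$.
   Context: $\mathbb{D}$ denotes the open unit disc in $\mathbb{C}$. *)

theory Defs
  imports "HOL-Analysis.Analysis"
begin

definition cscale2 :: "complex \<Rightarrow> complex \<times> complex \<Rightarrow> complex \<times> complex" where
  "cscale2 c w = (c * fst w, c * snd w)"

definition holomorphic2_on :: "(complex \<times> complex \<Rightarrow> complex \<times> complex) \<Rightarrow> (complex \<times> complex) set \<Rightarrow> bool" where
  "holomorphic2_on F U \<longleftrightarrow>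
     (\<forall>z\<in>U. \<exists>L. (F has_derivative L) (at z) \<and> (\<forall>c w. L (cscale2 c w) = cscale2 c (L w)))"

definition biholomorphic2 :: "(complex \<times> complex) set \<Rightarrow> (complex \<times> complex) set \<Rightarrow> bool" where
  "biholomorphic2 A B \<longleftrightarrow>
     (\<exists>F G. holomorphic2_on F A \<and> holomorphic2_on G B \<and> F ` A = B \<and> G ` B = A \<and>
            (\<forall>z\<in>A. G (F z) = z) \<and> (\<forall>w\<in>B. F (G w) = w))"

definition symmetrized_bidisc :: "(complex \<times> complex) set" where
  "symmetrized_bidisc = {(z1 + z2, z1 * z2) | z1 z2. norm z1 < 1 \<and> norm z2 < 1}"

definition domain_D1 :: "(complex \<times> complex) set" where
  "domain_D1 = {(z1, z2). 1 + (norm z1)^2 - (norm z2)^2 > norm (1 + z1^2 - z2^2)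
                     \<and> Im (z1 * (1 + cnj z2)) > 0}"

end

theory Submission
  imports Defs
begin

lemma divD: assumes "(D::real) > 0" shows "(1 + A/D - B/D > C/D) \<longleftrightarrow> (D + A - B > C)"
proof -
  have h: "1 + A/D - B/D - C/D = (D+A-B-C)/D" using assms by (simp add: field_simps)
  have "(1 + A/D - B/D > C/D) \<longleftrightarrow> 0 < (D+A-B-C)/D" using h by linarith
  also have "\<dots> \<longleftrightarrow> 0 < D+A-B-C" using assms by (simp add: zero_less_divide_iff)
  finally show ?thesis by linarith
qed

lemma K1:
  fixes z1 z2 :: complex
  assumes dd: "z1*z2 \<noteq> 1"
  defines "a \<equiv> \<i>*(1+z1*z2)/(1-z1*z2)" and "b \<equiv> \<i>*(z1+z2)/(1-z1*z2)"
  shows "(1 + (cmod a)^2 - (cmod b)^2 > cmod (1 + a^2 - b^2)) \<longleftrightarrow>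
         (1 - (cmod z1)^2) * (1 - (cmod z2)^2) > 0"
proof -
  define d where "d = 1 - z1*z2"
  have d0: "d \<noteq> 0" using dd by (simp add: d_def)
  have dp: "(cmod d)^2 > 0" using d0 by simp
  have e1: "1 + a^2 - b^2 = (z1-z2)^2/d^2"
  proof -
    have a2: "a^2 = -((1+z1*z2)^2)/d^2"
      unfolding a_def d_def by (simp add: power_divide power_mult_distrib)
    have b2: "b^2 = -((z1+z2)^2)/d^2"
      unfolding b_def d_def by (simp add: power_divide power_mult_distrib)
    have "1 + a^2 - b^2 = (d^2 - (1+z1*z2)^2 + (z1+z2)^2)/d^2"
      using d0 unfolding a2 b2 by (simp add: field_simps)
    also have "d^2 - (1+z1*z2)^2 + (z1+z2)^2 = (z1-z2)^2" unfolding d_def by algebra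
    finally show ?thesis .
  qed
  have na: "(cmod a)^2 = (cmod (1+z1*z2))^2/(cmod d)^2"
    unfolding a_def d_def[symmetric] by (simp add: norm_divide norm_mult power_divide)
  have nb: "(cmod b)^2 = (cmod (z1+z2))^2/(cmod d)^2"
    unfolding b_def d_def[symmetric] by (simp add: norm_divide norm_mult power_divide)
  have nc: "cmod (1 + a^2 - b^2) = (cmod (z1-z2))^2/(cmod d)^2"
    unfolding e1 by (simp add: norm_divide norm_power)
  have key: "(cmod d)^2 + (cmod (1+z1*z2))^2 - (cmod (z1+z2))^2 - (cmod (z1-z2))^2
      = 2 * ((1 - (cmod z1)^2) * (1 - (cmod z2)^2))"
    unfolding d_def cmod_power2 by (simp add: algebra_simps power2_eq_square)
  have "(1 + (cmod a)^2 - (cmod b)^2 > cmod (1 + a^2 - b^2)) \<longleftrightarrow>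
     ((cmod d)^2 + (cmod (1+z1*z2))^2 - (cmod (z1+z2))^2 > (cmod (z1-z2))^2)"
    unfolding na nb nc using dp by (rule divD)
  also have "\<dots> \<longleftrightarrow> (1 - (cmod z1)^2) * (1 - (cmod z2)^2) > 0" using key by linarith
  finally show ?thesis .
qed

lemma K2:
  fixes z1 z2 :: complex
  assumes dd: "z1*z2 \<noteq> 1"
  defines "a \<equiv> \<i>*(1+z1*z2)/(1-z1*z2)" and "b \<equiv> \<i>*(z1+z2)/(1-z1*z2)"
  shows "Im (a * (1 + cnj b)) * (cmod (1-z1*z2))^2 =
    1 - (cmod z1)^2 * (cmod z2)^2 - Im z1 * (1 - (cmod z2)^2) - Im z2 * (1 - (cmod z1)^2)"
proof -
  define d where "d = 1 - z1*z2"
  have d0: "d \<noteq> 0" using dd by (simp add: d_def)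
  have dc: "d * cnj d = of_real ((cmod d)^2)" using complex_norm_square[of d] by simp
  have "a * (1 + cnj b) = \<i>*(1+z1*z2)*(cnj d - \<i>*cnj(z1+z2)) / (d * cnj d)"
    using d0 unfolding a_def b_def d_def[symmetric] by (simp add: field_simps)
  hence eq: "a * (1 + cnj b) * of_real ((cmod d)^2) = \<i>*(1+z1*z2)*(cnj d - \<i>*cnj(z1+z2))"
    using d0 dc by (simp add: field_simps)
  have "Im (a * (1 + cnj b)) * (cmod d)^2 = Im (\<i>*(1+z1*z2)*(cnj d - \<i>*cnj(z1+z2)))"
    using arg_cong[where f=Im, OF eq] by simp
  also have "\<dots> = 1 - (cmod z1)^2 * (cmod z2)^2 - Im z1 * (1 - (cmod z2)^2) - Im z2 * (1 - (cmod z1)^2)"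
    unfolding d_def cmod_power2 by (simp add: algebra_simps power2_eq_square)
  finally show ?thesis unfolding d_def .
qed

lemma yb1: fixes y r :: real assumes "y^2 \<le> r" shows "y \<le> (1+r)/2"
proof -
  have "y \<le> (1+y^2)/2" using sum_squares_ge_zero[of "y-1" 0] by (simp add: power2_eq_square algebra_simps)
  moreover have "(1+y^2)/2 \<le> (1+r)/2" using assms by simp
  ultimately show ?thesis by (rule order_trans)
qed

lemma yb2: fixes y r :: real assumes "y^2 \<le> r" "r < 1" shows "y < (1+r)/2"
proof (cases "y^2 < r")
  case True
  have "y \<le> (1+y^2)/2" using sum_squares_ge_zero[of "y-1" 0] by (simp add: power2_eq_square algebra_simps)
  moreover have "(1+y^2)/2 < (1+r)/2" using True by simp
  ultimately show ?thesis by (rule order_le_less_trans)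
next
  case False
  hence e: "y^2 = r" using assms by linarith
  hence "y \<noteq> 1" using assms by auto
  hence "(y-1)^2 > 0" by simp
  hence "y < (1+y^2)/2" by (simp add: power2_eq_square algebra_simps)
  thus ?thesis using e by simp
qed

lemma K3:
  fixes r1 r2 y1 y2 :: real
  assumes "y1^2 \<le> r1" "y2^2 \<le> r2"
  shows "((1-r1)*(1-r2) > 0 \<and> 1 - r1*r2 - y1*(1-r2) - y2*(1-r1) > 0) \<longleftrightarrow> (r1 < 1 \<and> r2 < 1)"
proof -
  have Q: "1 - r1*r2 - y1*(1-r2) - y2*(1-r1) = (1-r2)*((1+r1)/2 - y1) + (1-r1)*((1+r2)/2 - y2)"
    by (simp add: field_simps)
  have h1: "(1+r1)/2 - y1 \<ge> 0" "(1+r2)/2 - y2 \<ge> 0" using yb1[OF assms(1)] yb1[OF assms(2)] by simp_all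
  show ?thesis
  proof
    assume A: "(1-r1)*(1-r2) > 0 \<and> 1 - r1*r2 - y1*(1-r2) - y2*(1-r1) > 0"
    show "r1 < 1 \<and> r2 < 1"
    proof (rule ccontr)
      assume "\<not> (r1 < 1 \<and> r2 < 1)"
      with A have "r1 > 1" "r2 > 1" by (auto simp: zero_less_mult_iff)
      hence "(1-r2)*((1+r1)/2 - y1) \<le> 0" "(1-r1)*((1+r2)/2 - y2) \<le> 0"
        using h1 by (auto intro!: mult_nonpos_nonneg)
      thus False using A Q by linarith
    qed
  next
    assume B: "r1 < 1 \<and> r2 < 1"
    have "(1+r1)/2 - y1 > 0" "(1+r2)/2 - y2 > 0" using yb2[OF assms(1)] yb2[OF assms(2)] B by simp_all
    hence "(1-r2)*((1+r1)/2 - y1) > 0" "(1-r1)*((1+r2)/2 - y2) > 0" using B by auto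
    thus "(1-r1)*(1-r2) > 0 \<and> 1 - r1*r2 - y1*(1-r2) - y2*(1-r1) > 0" using B Q by simp
  qed
qed

lemma K:
  fixes z1 z2 :: complex
  assumes dd: "z1*z2 \<noteq> 1"
  shows "(\<i>*(1+z1*z2)/(1-z1*z2), \<i>*(z1+z2)/(1-z1*z2)) \<in> domain_D1 \<longleftrightarrow> cmod z1 < 1 \<and> cmod z2 < 1"
proof -
  have dp: "(cmod (1-z1*z2))^2 > 0" using dd by simp
  have y1: "(Im z1)^2 \<le> (cmod z1)^2" "(Im z2)^2 \<le> (cmod z2)^2" by (simp_all add: cmod_power2)
  define a where "a = \<i>*(1+z1*z2)/(1-z1*z2)"
  define b where "b = \<i>*(z1+z2)/(1-z1*z2)"
  note k1 = K1[OF dd, folded a_def b_def]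
  note k2 = K2[OF dd, folded a_def b_def]
  have "(a, b) \<in> domain_D1 \<longleftrightarrow>
     (1 + (cmod a)^2 - (cmod b)^2 > cmod (1 + a^2 - b^2) \<and> Im (a * (1 + cnj b)) > 0)"
    unfolding domain_D1_def by simp
  also have "\<dots> \<longleftrightarrow> ((1 - (cmod z1)^2) * (1 - (cmod z2)^2) > 0 \<and>
      1 - (cmod z1)^2 * (cmod z2)^2 - Im z1 * (1 - (cmod z2)^2) - Im z2 * (1 - (cmod z1)^2) > 0)"
    unfolding k1 k2[symmetric] using dp by (simp add: zero_less_mult_iff)
  also have "\<dots> \<longleftrightarrow> (cmod z1)^2 < 1 \<and> (cmod z2)^2 < 1" by (rule K3[OF y1])
  also have "\<dots> \<longleftrightarrow> cmod z1 < 1 \<and> cmod z2 < 1" by (simp add: power_less_one_iff abs_less_iff)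
  finally show ?thesis unfolding a_def b_def .
qed

lemma hol2I:
  fixes F :: "complex \<times> complex \<Rightarrow> complex \<times> complex"
  assumes "\<And>z. z \<in> U \<Longrightarrow> \<exists>c1 c2 c3 c4::complex. (F has_derivative (\<lambda>h::complex\<times>complex. (c1* fst h + c2* snd h, c3* fst h + c4* snd h))) (at z)"
  shows "holomorphic2_on F U"
  unfolding holomorphic2_on_def
proof
  fix z assume "z \<in> U"
  then obtain c1 c2 c3 c4 where d: "(F has_derivative (\<lambda>h::complex\<times>complex. (c1* fst h + c2* snd h, c3* fst h + c4* snd h))) (at z)"
    using assms by blast
  show "\<exists>L. (F has_derivative L) (at z) \<and> (\<forall>c w. L (cscale2 c w) = cscale2 c (L w))"
    by (rule exI, rule conjI, rule d) (simp add: cscale2_def algebra_simps)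
qed

definition Fm :: "complex \<times> complex \<Rightarrow> complex \<times> complex" where
  "Fm x = (\<i>*(1+snd x)/(1-snd x), \<i>* fst x/(1-snd x))"

definition Gm :: "complex \<times> complex \<Rightarrow> complex \<times> complex" where
  "Gm x = (2* snd x/(fst x+\<i>), (fst x-\<i>)/(fst x+\<i>))"

lemma g1d: "p \<noteq> 1 \<Longrightarrow> ((\<lambda>p. \<i>*(1+p)/(1-p)) has_field_derivative (2*\<i>/(1-p)^2)) (at p)"
  by (rule derivative_eq_intros refl | simp)+ (simp add: field_simps power2_eq_square)

lemma g2d: "p \<noteq> 1 \<Longrightarrow> ((\<lambda>p. \<i>/(1-p)) has_field_derivative (\<i>/(1-p)^2)) (at p)"
  by (rule derivative_eq_intros refl | simp)+ (simp add: field_simps power2_eq_square)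

lemma Fm_deriv:
  assumes "snd z \<noteq> 1"
  shows "(Fm has_derivative (\<lambda>h. (0 * fst h + (2*\<i>/(1-snd z)^2) * snd h,
      (\<i>/(1-snd z)) * fst h + (fst z * (\<i>/(1-snd z)^2)) * snd h))) (at z)"
proof -
  have c1: "((\<lambda>x. \<i>*(1+snd x)/(1-snd x)) has_derivative (\<lambda>h. snd h * (2*\<i>/(1-snd z)^2))) (at z)"
    using has_derivative_compose[OF has_derivative_snd[OF has_derivative_ident] has_field_derivative_imp_has_derivative[OF g1d[OF assms]]]
    by (simp add: mult.commute)
  have c2': "((\<lambda>x. \<i>/(1-snd x)) has_derivative (\<lambda>h. snd h * (\<i>/(1-snd z)^2))) (at z)"
    using has_derivative_compose[OF has_derivative_snd[OF has_derivative_ident] has_field_derivative_imp_has_derivative[OF g2d[OF assms]]]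
    by (simp add: mult.commute)
  have c2: "((\<lambda>x. fst x * (\<i>/(1-snd x))) has_derivative
     (\<lambda>h. fst z * (snd h * (\<i>/(1-snd z)^2)) + fst h * (\<i>/(1-snd z)))) (at z)"
    by (rule has_derivative_mult[OF has_derivative_fst[OF has_derivative_ident] c2'])
  have "(Fm has_derivative (\<lambda>h. (snd h * (2*\<i>/(1-snd z)^2),
     fst z * (snd h * (\<i>/(1-snd z)^2)) + fst h * (\<i>/(1-snd z))))) (at z)"
  proof -
    have e: "Fm = (\<lambda>x. (\<i>*(1+snd x)/(1-snd x), fst x * (\<i>/(1-snd x))))"
      by (auto simp: Fm_def fun_eq_iff)
    show ?thesis unfolding e by (rule has_derivative_Pair[OF c1 c2])
  qed
  thus ?thesis by (rule has_derivative_eq_rhs) (auto simp: fun_eq_iff algebra_simps)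
qed


lemma ne_i: "(a::complex) \<noteq> -\<i> \<Longrightarrow> a + \<i> \<noteq> 0 \<and> \<i> \<noteq> -a"
  by (metis add.commute add_eq_0_iff minus_minus)

lemma h1d: assumes "a \<noteq> -\<i>" shows "((\<lambda>a. 2/(a+\<i>)) has_field_derivative (-2/(a+\<i>)^2)) (at a)"
proof -
  have d: "a + \<i> \<noteq> 0" "\<i> \<noteq> -a" using ne_i[OF assms] by auto
  have "((\<lambda>a. 2/(a+\<i>)) has_field_derivative ((0 * (a + \<i>) - 2 * (1 + 0)) / ((a + \<i>) * (a + \<i>)))) (at a)"
    by (intro derivative_intros) (use d in auto)
  then show ?thesis by (rule DERIV_cong) (use d in \<open>simp add: field_simps power2_eq_square\<close>)
qed

lemma h2d: assumes "a \<noteq> -\<i>" shows "((\<lambda>a. (a-\<i>)/(a+\<i>)) has_field_derivative (2*\<i>/(a+\<i>)^2)) (at a)"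
proof -
  have d: "a + \<i> \<noteq> 0" "\<i> \<noteq> -a" using ne_i[OF assms] by auto
  have "((\<lambda>a. (a-\<i>)/(a+\<i>)) has_field_derivative (((1 - 0) * (a + \<i>) - (a - \<i>) * (1 + 0)) / ((a + \<i>) * (a + \<i>)))) (at a)"
    by (intro derivative_intros) (use d in auto)
  then show ?thesis by (rule DERIV_cong) (use d in \<open>simp add: field_simps power2_eq_square\<close>)
qed

lemma Gm_deriv:
  assumes "fst z \<noteq> -\<i>"
  shows "(Gm has_derivative (\<lambda>h. ((snd z * (-2/(fst z+\<i>)^2)) * fst h + (2/(fst z+\<i>)) * snd h,
      (2*\<i>/(fst z+\<i>)^2) * fst h + 0 * snd h))) (at z)"
proof -
  have c2: "((\<lambda>x. (fst x-\<i>)/(fst x+\<i>)) has_derivative (\<lambda>h. fst h * (2*\<i>/(fst z+\<i>)^2))) (at z)"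
    using has_derivative_compose[OF has_derivative_fst[OF has_derivative_ident] has_field_derivative_imp_has_derivative[OF h2d[OF assms]]]
    by (simp add: mult.commute)
  have c1': "((\<lambda>x. 2/(fst x+\<i>)) has_derivative (\<lambda>h. fst h * (-2/(fst z+\<i>)^2))) (at z)"
    using has_derivative_compose[OF has_derivative_fst[OF has_derivative_ident] has_field_derivative_imp_has_derivative[OF h1d[OF assms]]]
    by (simp add: mult.commute)
  have c1: "((\<lambda>x. snd x * (2/(fst x+\<i>))) has_derivative
     (\<lambda>h. snd z * (fst h * (-2/(fst z+\<i>)^2)) + snd h * (2/(fst z+\<i>)))) (at z)"
    by (rule has_derivative_mult[OF has_derivative_snd[OF has_derivative_ident] c1'])
  have e: "Gm = (\<lambda>x. (snd x * (2/(fst x+\<i>)), (fst x-\<i>)/(fst x+\<i>)))"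
    by (auto simp: Gm_def fun_eq_iff)
  show ?thesis unfolding e
    by (rule has_derivative_eq_rhs[OF has_derivative_Pair[OF c1 c2]]) (auto simp: fun_eq_iff algebra_simps)
qed


lemma D1_ne: assumes "(a, b) \<in> domain_D1" shows "a \<noteq> -\<i>"
proof
  assume a: "a = -\<i>"
  have "1 + (cmod a)^2 - (cmod b)^2 > cmod (1 + a^2 - b^2)" "Im (a * (1 + cnj b)) > 0"
    using assms by (auto simp: domain_D1_def)
  moreover have "cmod (1 + a^2 - b^2) = (cmod b)^2" using a by (simp add: norm_power)
  moreover have "cmod a = 1" using a by simp
  moreover have "Im (a * (1 + cnj b)) = -(1 + Re b)" using a by simp
  ultimately have "(cmod b)^2 < 1" "Re b < -1" by auto
  moreover have "\<bar>Re b\<bar> \<le> cmod b" by (rule abs_Re_le_cmod)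
  moreover have "cmod b < 1"
    using \<open>(cmod b)^2 < 1\<close> by (metis abs_norm_cancel abs_square_less_1)
  ultimately show False by linarith
qed

lemma GF: assumes p: "p \<noteq> 1" shows "Gm (Fm (s, p)) = (s, p)"
proof -
  have d: "1 - p \<noteq> 0" using p by simp
  have e1: "\<i>*(1+p)/(1-p) + \<i> = 2*\<i>/(1-p)" using d by (simp add: field_simps)
  have e2: "\<i>*(1+p)/(1-p) - \<i> = 2*\<i>*p/(1-p)" using d by (simp add: field_simps)
  have "Gm (Fm (s, p)) = (2 * (\<i> * s/(1-p)) / (2*\<i>/(1-p)), (2*\<i>*p/(1-p)) / (2*\<i>/(1-p)))"
    unfolding Gm_def Fm_def fst_conv snd_conv e1 e2 ..
  also have "\<dots> = (s, p)"
  proof -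
    have q: "\<And>x y. x/(1-p) / (y/(1-p)) = x/y" using d by simp
    show ?thesis unfolding times_divide_eq_right q by simp
  qed
  finally show ?thesis .
qed

lemma FG: assumes a: "a \<noteq> -\<i>" shows "Fm (Gm (a, b)) = (a, b)"
proof -
  have d: "a + \<i> \<noteq> 0" using ne_i[OF a] by auto
  have e1: "1 - (a-\<i>)/(a+\<i>) = 2*\<i>/(a+\<i>)" using d by (simp add: field_simps)
  have e2: "1 + (a-\<i>)/(a+\<i>) = 2*a/(a+\<i>)" using d by (simp add: field_simps)
  have "Fm (Gm (a, b)) = (\<i>*(2*a/(a+\<i>))/(2*\<i>/(a+\<i>)), \<i>*(2*b/(a+\<i>))/(2*\<i>/(a+\<i>)))"
    unfolding Gm_def Fm_def fst_conv snd_conv e1 e2 ..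
  also have "\<dots> = (a, b)"
  proof -
    have q: "\<And>x y. x/(a+\<i>) / (y/(a+\<i>)) = x/y" using d by simp
    show ?thesis unfolding times_divide_eq_right q by simp
  qed
  finally show ?thesis .
qed

lemma F_into:
  assumes "x \<in> symmetrized_bidisc"
  shows "Fm x \<in> domain_D1 \<and> snd x \<noteq> 1"
proof -
  obtain z1 z2 where x: "x = (z1+z2, z1*z2)" and n: "cmod z1 < 1" "cmod z2 < 1"
    using assms by (auto simp: symmetrized_bidisc_def)
  have "cmod (z1*z2) < 1" using n by (simp add: norm_mult mult_strict_mono' order_le_less_trans)
    (metis mult_less_cancel_right1 norm_ge_zero order_le_less_trans less_eq_real_def mult_strict_mono' n(1) n(2) mult_1_left)
  hence p: "z1*z2 \<noteq> 1" by auto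
  have "Fm x = (\<i>*(1+z1*z2)/(1-z1*z2), \<i>*(z1+z2)/(1-z1*z2))" by (simp add: x Fm_def)
  thus ?thesis using K[OF p] n p x by simp
qed

lemma G_into:
  assumes y: "y \<in> domain_D1"
  shows "Gm y \<in> symmetrized_bidisc"
proof -
  obtain a b where yab: "y = (a, b)" by (cases y)
  have a: "a \<noteq> -\<i>" using D1_ne y yab by simp
  have d: "a + \<i> \<noteq> 0" using ne_i[OF a] by auto
  define s where "s = fst (Gm y)"
  define p where "p = snd (Gm y)"
  have gy: "Gm y = (s, p)" by (simp add: s_def p_def)
  have p1: "p \<noteq> 1"
  proof
    assume "p = 1"
    hence "(a-\<i>)/(a+\<i>) = 1" by (simp add: p_def Gm_def yab)
    hence "a - \<i> = a + \<i>" using d by (simp add: divide_eq_1_iff)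
    thus False by simp
  qed
  define r where "r = csqrt (s^2 - 4*p)"
  define z1 where "z1 = (s + r)/2"
  define z2 where "z2 = (s - r)/2"
  have sz: "s = z1 + z2" by (simp add: z1_def z2_def field_simps)
  have pz: "p = z1 * z2"
  proof -
    have "z1 * z2 = (s^2 - r^2)/4" by (simp add: z1_def z2_def field_simps power2_eq_square)
    also have "r^2 = s^2 - 4*p" by (simp add: r_def)
    finally show ?thesis by simp
  qed
  have "Fm (s, p) = y" using FG[OF a, of b] gy yab by simp
  hence "(\<i>*(1+z1*z2)/(1-z1*z2), \<i>*(z1+z2)/(1-z1*z2)) \<in> domain_D1"
    using y by (simp add: Fm_def sz pz)
  hence "cmod z1 < 1 \<and> cmod z2 < 1" using K p1 pz by blast
  thus ?thesis unfolding gy symmetrized_bidisc_def sz pz by blast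
qed

theorem theorem3p2:
  shows "biholomorphic2 symmetrized_bidisc domain_D1"
  unfolding biholomorphic2_def
proof (intro exI conjI)
  show "holomorphic2_on Fm symmetrized_bidisc"
  proof (rule hol2I)
    fix z assume "z \<in> symmetrized_bidisc"
    hence "snd z \<noteq> 1" using F_into by blast
    thus "\<exists>c1 c2 c3 c4. (Fm has_derivative (\<lambda>h. (c1 * fst h + c2 * snd h, c3 * fst h + c4 * snd h))) (at z)"
      by (blast intro: Fm_deriv)
  qed
  show "holomorphic2_on Gm domain_D1"
  proof (rule hol2I)
    fix z assume z: "z \<in> domain_D1"
    have "fst z \<noteq> -\<i>" using D1_ne[of "fst z" "snd z"] z by simp
    thus "\<exists>c1 c2 c3 c4. (Gm has_derivative (\<lambda>h. (c1 * fst h + c2 * snd h, c3 * fst h + c4 * snd h))) (at z)"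
      by (blast intro: Gm_deriv)
  qed
  have gf: "\<forall>z\<in>symmetrized_bidisc. Gm (Fm z) = z"
  proof
    fix z assume "z \<in> symmetrized_bidisc"
    hence "snd z \<noteq> 1" using F_into by blast
    thus "Gm (Fm z) = z" using GF[of "snd z" "fst z"] by simp
  qed
  have fg: "\<forall>w\<in>domain_D1. Fm (Gm w) = w"
  proof
    fix w assume w: "w \<in> domain_D1"
    have "fst w \<noteq> -\<i>" using D1_ne[of "fst w" "snd w"] w by simp
    thus "Fm (Gm w) = w" using FG[of "fst w" "snd w"] by simp
  qed
  show "\<forall>z\<in>symmetrized_bidisc. Gm (Fm z) = z" by (rule gf)
  show "\<forall>w\<in>domain_D1. Fm (Gm w) = w" by (rule fg)
  show "Fm ` symmetrized_bidisc = domain_D1"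
  proof
    show "Fm ` symmetrized_bidisc \<subseteq> domain_D1" using F_into by blast
    show "domain_D1 \<subseteq> Fm ` symmetrized_bidisc"
    proof
      fix w assume w: "w \<in> domain_D1"
      hence "w = Fm (Gm w)" using fg by simp
      moreover have "Gm w \<in> symmetrized_bidisc" using G_into w by blast
      ultimately show "w \<in> Fm ` symmetrized_bidisc" by blast
    qed
  qed
  show "Gm ` domain_D1 = symmetrized_bidisc"
  proof
    show "Gm ` domain_D1 \<subseteq> symmetrized_bidisc" using G_into by blast
    show "symmetrized_bidisc \<subseteq> Gm ` domain_D1"
    proof
      fix z assume z: "z \<in> symmetrized_bidisc"
      hence "z = Gm (Fm z)" using gf by simp
      moreover have "Fm z \<in> domain_D1" using F_into z by blast
      ultimately show "z \<in> Gm ` domain_D1" by blast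
    qed
  qed
qed

end
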